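(* Let $q$ be an even positive integer and $h_q(x_1,\dots,x_d):=\sum_{\mathbf{k}\in\mathbb{Z}_{\ge0}^d,\ \|\mathbf{k}\|_1=q}x_1^{k_1}\cdots x_d^{k_d}$ the complete homogeneous symmetric polynomial of degree $q$ in $d$ variables. In each of the cases (a) $q=2$, (b) $d=2$, (c) $d=3$ and $q=4$, we have for all $(x_1,\dots,x_d)\in\mathbb{R}^d$ $$h_q(x_1,\dots,x_d)\ge\frac12\sum_{j=1}^d x_j^q.$$ *)

theory Defs
  imports Complex_Main
begin

definition complete_hom :: "nat \<Rightarrow> nat \<Rightarrow> (nat \<Rightarrow> real) \<Rightarrow> real" where
  "complete_hom d q x =
     (\<Sum>k\<in>{k :: nat \<Rightarrow> nat. (\<forall>i. d \<le> i \<longrightarrow> k i = 0) \<and> (\<Sum>i<d. k i) = q}.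
        \<Prod>i<d. x i ^ k i)"

end

theory Submission
  imports Defs
begin

definition KS :: "nat \<Rightarrow> nat \<Rightarrow> (nat \<Rightarrow> nat) set" where
  "KS d q = {k :: nat \<Rightarrow> nat. (\<forall>i. d \<le> i \<longrightarrow> k i = 0) \<and> (\<Sum>i<d. k i) = q}"

lemma KS_0: "KS 0 q = (if q = 0 then {\<lambda>_. 0} else {})"
  unfolding KS_def by auto

lemma KS_Suc: "KS (Suc d) q = (\<lambda>(j,k'). k'(d:=j)) ` (SIGMA j:{0..q}. KS d (q - j))"
proof
  show "KS (Suc d) q \<subseteq> (\<lambda>(j,k'). k'(d:=j)) ` (SIGMA j:{0..q}. KS d (q - j))"
  proof
    fix k assume k: "k \<in> KS (Suc d) q"
    have s: "(\<Sum>i<d. (k(d:=0)) i) = (\<Sum>i<d. k i)" by (rule sum.cong) auto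
    have "(k d, k(d:=0)) \<in> (SIGMA j:{0..q}. KS d (q - j))"
      using k s unfolding KS_def by auto
    moreover have "k = (\<lambda>(j,k'). k'(d:=j)) (k d, k(d:=0))" by auto
    ultimately show "k \<in> (\<lambda>(j,k'). k'(d:=j)) ` (SIGMA j:{0..q}. KS d (q - j))" by blast
  qed
next
  show "(\<lambda>(j,k'). k'(d:=j)) ` (SIGMA j:{0..q}. KS d (q - j)) \<subseteq> KS (Suc d) q"
  proof clarify
    fix j k' assume j: "j \<in> {0..q}" and k': "k' \<in> KS d (q - j)"
    have s: "(\<Sum>i<d. (k'(d:=j)) i) = (\<Sum>i<d. k' i)" by (rule sum.cong) auto
    show "k'(d:=j) \<in> KS (Suc d) q"
      using j k' s unfolding KS_def by auto
  qed
qed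

lemma KS_finite: "finite (KS d q)"
proof (induction d arbitrary: q)
  case 0 then show ?case by (simp add: KS_0)
next
  case (Suc d) then show ?case by (simp add: KS_Suc)
qed

lemma inj_KS: "inj_on (\<lambda>(j,k'). k'(d:=j)) (SIGMA j:{0..q}. KS d (q - j))"
proof (rule inj_onI)
  fix p1 p2
  assume a1: "p1 \<in> (SIGMA j:{0..q}. KS d (q - j))" and a2: "p2 \<in> (SIGMA j:{0..q}. KS d (q - j))"
     and e0: "(\<lambda>(j,k'). k'(d:=j)) p1 = (\<lambda>(j,k'). k'(d:=j)) p2"
  obtain j k' where p1: "p1 = (j, k')" by fastforce
  obtain j2 k2 where p2: "p2 = (j2, k2)" by fastforce
  have e: "k'(d := j) = k2(d := j2)" using e0 p1 p2 by simp
  have "k' d = 0" "k2 d = 0" using a1 a2 p1 p2 unfolding KS_def by auto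
  have j: "j = j2" using e by (metis fun_upd_same)
  have "k' = (k'(d := j))(d := 0)" using \<open>k' d = 0\<close> by auto
  also have "\<dots> = (k2(d := j2))(d := 0)" using e by simp
  also have "\<dots> = k2" using \<open>k2 d = 0\<close> by auto
  finally show "p1 = p2" using j p1 p2 by simp
qed

lemma ch_KS: "complete_hom d q x = (\<Sum>k\<in>KS d q. \<Prod>i<d. x i ^ k i)"
  unfolding complete_hom_def KS_def by simp

lemma ch_0: "complete_hom 0 q x = (if q = 0 then 1 else 0)"
  by (simp add: ch_KS KS_0)

lemma ch_Suc: "complete_hom (Suc d) q x = (\<Sum>j=0..q. x d ^ j * complete_hom d (q - j) x)"
proof -
  have "complete_hom (Suc d) q x = (\<Sum>(j,k)\<in>(SIGMA j:{0..q}. KS d (q - j)). \<Prod>i<Suc d. x i ^ (k(d := j)) i)"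
    unfolding ch_KS KS_Suc
    by (subst sum.reindex[OF inj_KS]) (simp add: case_prod_beta)
  also have "\<dots> = (\<Sum>j=0..q. \<Sum>k\<in>KS d (q - j). \<Prod>i<Suc d. x i ^ (k(d := j)) i)"
    by (subst sum.Sigma) (auto simp: KS_finite)
  also have "\<dots> = (\<Sum>j=0..q. \<Sum>k\<in>KS d (q - j). x d ^ j * (\<Prod>i<d. x i ^ k i))"
  proof (intro sum.cong refl)
    fix j k
    have "(\<Prod>i<d. x i ^ (k(d := j)) i) = (\<Prod>i<d. x i ^ k i)" by (rule prod.cong) auto
    then show "(\<Prod>i<Suc d. x i ^ (k(d := j)) i) = x d ^ j * (\<Prod>i<d. x i ^ k i)"
      by (simp add: mult.commute)
  qed
  also have "\<dots> = (\<Sum>j=0..q. x d ^ j * complete_hom d (q - j) x)"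
    by (simp add: ch_KS sum_distrib_left)
  finally show ?thesis .
qed

lemma ch_1: "complete_hom (Suc 0) n x = x 0 ^ n"
proof -
  have "complete_hom (Suc 0) n x = (\<Sum>j=0..n. (if j = n then x 0 ^ j else 0))"
    unfolding ch_Suc ch_0 by (rule sum.cong) auto
  also have "\<dots> = x 0 ^ n" by simp
  finally show ?thesis .
qed

lemma ch_2: "complete_hom 2 n x = (\<Sum>j=0..n. x 1 ^ j * x 0 ^ (n - j))"
proof -
  have "complete_hom 2 n x = complete_hom (Suc (Suc 0)) n x" by (simp add: numeral_2_eq_2)
  also have "\<dots> = (\<Sum>j=0..n. x (Suc 0) ^ j * complete_hom (Suc 0) (n - j) x)"
    by (rule ch_Suc)
  also have "\<dots> = (\<Sum>j=0..n. x 1 ^ j * x 0 ^ (n - j))" by (simp only: ch_1 One_nat_def)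
  finally show ?thesis .
qed

definition HH :: "real \<Rightarrow> real \<Rightarrow> nat \<Rightarrow> real" where
  "HH a b n = (\<Sum>j=0..n. b ^ j * a ^ (n - j))"

lemma HH_Suc1: "HH a b (Suc n) = a ^ Suc n + b * HH a b n"
  unfolding HH_def
  by (subst sum.atLeast0_atMost_Suc_shift) (simp add: sum_distrib_left mult.assoc)

lemma HH_Suc2: "HH a b (Suc n) = a * HH a b n + b ^ Suc n"
proof -
  have "HH a b (Suc n) = (\<Sum>j=0..n. b ^ j * a ^ (Suc n - j)) + b ^ Suc n"
    unfolding HH_def by (subst sum.atLeast0_atMost_Suc) simp
  also have "(\<Sum>j=0..n. b ^ j * a ^ (Suc n - j)) = a * HH a b n"
    unfolding HH_def sum_distrib_left
    by (rule sum.cong) (auto simp: Suc_diff_le)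
  finally show ?thesis .
qed

lemma HH_odd_nonneg: "0 \<le> (a + b) * HH a b (2 * m + 1)"
proof (induction m)
  case 0
  have "HH a b 0 = 1" by (simp add: HH_def)
  then have "HH a b 1 = a + b" using HH_Suc1[of a b 0] by simp
  then show ?case by simp
next
  case (Suc m)
  define n where "n = 2 * m + 1"
  have eq: "2 * Suc m + 1 = Suc (Suc n)" unfolding n_def by simp
  have e: "HH a b (2 * Suc m + 1) = a * a ^ (Suc n) + b * a ^ (Suc n) + b * b * HH a b n"
    unfolding eq HH_Suc1[of a b "Suc n"] HH_Suc1[of a b n] by (simp add: algebra_simps)
  have "(a + b) * HH a b (2 * Suc m + 1) = ((a + b) * (a + b)) * a ^ (Suc n) + (b * b) * ((a + b) * HH a b n)"
    unfolding e by (simp add: algebra_simps)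
  moreover have "0 \<le> a ^ (Suc n)"
  proof -
    have "Suc n = (m + 1) * 2" unfolding n_def by simp
    then have "a ^ (Suc n) = (a ^ (m + 1)) ^ 2" by (simp only: power_mult)
    then show ?thesis by simp
  qed
  moreover have "0 \<le> (a + b) * HH a b n" using Suc unfolding n_def .
  ultimately show ?case by simp
qed

lemma HH_main: "2 * HH a b (Suc n) - a ^ Suc n - b ^ Suc n = (a + b) * HH a b n"
  using HH_Suc1[of a b n] HH_Suc2[of a b n] by (simp add: algebra_simps)

lemma case_d2:
  assumes "even q" "q > 0"
  shows "complete_hom 2 q x \<ge> (1/2) * (\<Sum>j<2. x j ^ q)"
proof -
  obtain k where k: "q = 2 * k" using assms(1) by blast
  with assms(2) have "k > 0" by simp
  then obtain m where "k = Suc m" using gr0_conv_Suc by blast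
  with k have q: "q = Suc (2 * m + 1)" by simp
  have h: "complete_hom 2 q x = HH (x 0) (x 1) q" by (simp add: ch_2 HH_def)
  have "0 \<le> 2 * HH (x 0) (x 1) q - x 0 ^ q - x 1 ^ q"
    unfolding q HH_main using HH_odd_nonneg by simp
  then show ?thesis unfolding h by (simp add: numeral_2_eq_2)
qed

lemma ch_d0: "complete_hom d 0 x = 1"
  by (induction d) (auto simp: ch_0 ch_Suc)

lemma ch_d1: "complete_hom d 1 x = (\<Sum>i<d. x i)"
  by (induction d) (auto simp: ch_0 ch_Suc ch_d0 sum.atLeast0_atMost_Suc)

lemma ch_d2: "complete_hom d 2 x = ((\<Sum>i<d. x i ^ 2) + (\<Sum>i<d. x i) ^ 2) / 2"
proof (induction d)
  case 0 then show ?case by (simp add: ch_0)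
next
  case (Suc d)
  have "complete_hom (Suc d) 2 x = complete_hom d 2 x + x d * complete_hom d 1 x + x d ^ 2"
  proof -
    have s: "{0..2::nat} = {0,1,2}" by auto
    show ?thesis unfolding ch_Suc s by (simp add: ch_d0 power2_eq_square)
  qed
  then show ?case using Suc ch_d1[of d x] by (simp add: field_simps power2_eq_square)
qed

lemma case_q2: "complete_hom d 2 x \<ge> (1/2) * (\<Sum>j<d. x j ^ 2)"
  by (simp add: ch_d2)

lemma aux_ineq: "2 * a - b = c \<Longrightarrow> 0 \<le> c \<Longrightarrow> 1/2 * b \<le> (a::real)"
  by linarith

lemma case_d3: "complete_hom 3 4 x \<ge> (1/2) * (\<Sum>j<3. x j ^ 4)"
proof -
  have e: "2 * complete_hom 3 4 x - (\<Sum>j<3. x j ^ 4) = (x 0 + x 1 + x 2)^2 * (x 0^2 + x 1^2 + x 2^2)"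
    by (simp add: eval_nat_numeral ch_Suc ch_1 ch_0 sum.atLeast0_atMost_Suc algebra_simps)
  have "0 \<le> (x 0 + x 1 + x 2)^2 * (x 0^2 + x 1^2 + x 2^2)" by simp
  then show ?thesis using aux_ineq[OF e] by blast
qed

theorem proposition3:
  fixes d q :: nat and x :: "nat \<Rightarrow> real"
  assumes "even q" and "q > 0"
    and "q = 2 \<or> d = 2 \<or> (d = 3 \<and> q = 4)"
  shows "complete_hom d q x \<ge> (1/2) * (\<Sum>j<d. x j ^ q)"
proof -
  consider "q = 2" | "d = 2" | "d = 3" "q = 4" using assms(3) by blast
  then show ?thesis
  proof cases
    case 1 then show ?thesis using case_q2[where d=d and x=x] by (simp only:)
  next
    case 2 then show ?thesis using case_d2[OF assms(1,2), of x] by (simp only:)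
  next
    case 3 then show ?thesis using case_d3[of x] by (simp only:)
  qed
qed

end
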